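(* Let $G$ act on the CAT(0) cube complex $X$ by automorphisms non-transversely, let $\gamma$ be a segment and $x_0$ a vertex of $X$. Then the map $\phi_\gamma:G\to\mathbb R$, $\phi_\gamma(g)=\omega_\gamma(x_0,gx_0)$, is a quasimorphism with defect $D(\phi_\gamma)=\sup_{g,h\in G}|\phi_\gamma(gh)-\phi_\gamma(g)-\phi_\gamma(h)|\le 6$. Consequently its homogenisation $\overline\phi_\gamma(g)=\lim_{n\to\infty}\phi_\gamma(g^n)/n$ is a homogeneous quasimorphism with defect at most $12$.
   Context: $\mathcal{H}(X)$ is the set of halfspaces of $X$, $\overline\Phi$ the complement of $\Phi$. Two halfspaces are nested if one of $\Phi\subseteq\Psi$, $\overline{\Phi}\subseteq\Psi$, $\Phi\subseteq\overline{\Psi}$, $\overline{\Phi}\subseteq\overline{\Psi}$ holds, transverse otherwise; the action is non-transverse if there are no $\Phi\in\mathcal H(X)$, $h\in G$ with $\Phi$ and $h\Phi$ transverse. $\Phi\supsetneq\Psi$ tightly means $\Phi\supsetneq\Psi$ and no halfspace $\Phi'$ satisfies $\Phi\supsetneq\Phi'\supsetneq\Psi$. For vertices $x,y$, $[x,y]=\{\Phi\in\mathcal H(X): x\notin\Phi,\ y\in\Phi\}$. A segment is a finite sequence $\gamma=(\Phi_0,\dots,\Phi_r)$, $r\ge0$, of halfspaces with $\Phi_i\supsetneq\Phi_{i+1}$ tightly; its reverse is $\overline\gamma=(\overline\Phi_r,\dots,\overline\Phi_0)$. Two segments overlap if some halfspace of one is equal or transverse to some halfspace of the other. A segment is in $[x,y]$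 if all its halfspaces lie in $[x,y]$. Copies of $\gamma$ are the segments $h\gamma$, $h\in G$. $c_\gamma(x,y)$ is the largest cardinality of a set of pairwise non-overlapping copies of $\gamma$ all lying in $[x,y]$, and $\omega_\gamma(x,y)=c_\gamma(x,y)-c_{\overline\gamma}(x,y)$. *)

theory Defs
  imports Complex_Main "HOL-Algebra.Group"
begin

text \<open>A CAT(0) cube complex is represented by its 1-skeleton, a median graph
  (Chepoi, Roller): vertices are the elements of the type 'v, edges given by E.\<close>

definition walk :: "('v \<Rightarrow> 'v \<Rightarrow> bool) \<Rightarrow> 'v list \<Rightarrow> bool" where
  "walk E p \<longleftrightarrow> p \<noteq> [] \<and> (\<forall>i. Suc i < length p \<longrightarrow> E (p ! i) (p ! Suc i))"

definition gdist :: "('v \<Rightarrow> 'v \<Rightarrow> bool) \<Rightarrow> 'v \<Rightarrow> 'v \<Rightarrow> nat" where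
  "gdist E x y = (LEAST n. \<exists>p. walk E p \<and> hd p = x \<and> last p = y \<and> length p = Suc n)"

definition interval :: "('v \<Rightarrow> 'v \<Rightarrow> bool) \<Rightarrow> 'v \<Rightarrow> 'v \<Rightarrow> 'v set" where
  "interval E x y = {z. gdist E x z + gdist E z y = gdist E x y}"

definition median_graph :: "('v \<Rightarrow> 'v \<Rightarrow> bool) \<Rightarrow> bool" where
  "median_graph E \<longleftrightarrow>
     (\<forall>x y. E x y \<longrightarrow> E y x) \<and> (\<forall>x. \<not> E x x) \<and>
     (\<forall>x y. \<exists>p. walk E p \<and> hd p = x \<and> last p = y) \<and>
     (\<forall>x y z. \<exists>!m. m \<in> interval E x y \<inter> interval E y z \<inter> interval E x z)"

definition gconvex :: "('v \<Rightarrow> 'v \<Rightarrow> bool) \<Rightarrow> 'v set \<Rightarrow> bool" where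
  "gconvex E C \<longleftrightarrow> (\<forall>x\<in>C. \<forall>y\<in>C. interval E x y \<subseteq> C)"

definition halfspaces :: "('v \<Rightarrow> 'v \<Rightarrow> bool) \<Rightarrow> 'v set set" where
  "halfspaces E = {H. H \<noteq> {} \<and> H \<noteq> UNIV \<and> gconvex E H \<and> gconvex E (- H)}"

definition nested :: "'v set \<Rightarrow> 'v set \<Rightarrow> bool" where
  "nested A B \<longleftrightarrow> A \<subseteq> B \<or> - A \<subseteq> B \<or> A \<subseteq> - B \<or> - A \<subseteq> - B"

definition transverse :: "'v set \<Rightarrow> 'v set \<Rightarrow> bool" where
  "transverse A B \<longleftrightarrow> \<not> nested A B"

definition tightly_contains :: "('v \<Rightarrow> 'v \<Rightarrow> bool) \<Rightarrow> 'v set \<Rightarrow> 'v set \<Rightarrow> bool" where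
  "tightly_contains E A B \<longleftrightarrow> B \<subset> A \<and> \<not> (\<exists>C\<in>halfspaces E. B \<subset> C \<and> C \<subset> A)"

definition segment :: "('v \<Rightarrow> 'v \<Rightarrow> bool) \<Rightarrow> 'v set list \<Rightarrow> bool" where
  "segment E s \<longleftrightarrow> s \<noteq> [] \<and> set s \<subseteq> halfspaces E \<and>
     (\<forall>i. Suc i < length s \<longrightarrow> tightly_contains E (s ! i) (s ! Suc i))"

definition rev_segment :: "'v set list \<Rightarrow> 'v set list" where
  "rev_segment s = rev (map uminus s)"

definition overlap :: "'v set list \<Rightarrow> 'v set list \<Rightarrow> bool" where
  "overlap s t \<longleftrightarrow> (\<exists>A\<in>set s. \<exists>B\<in>set t. A = B \<or> transverse A B)"

definition sep :: "('v \<Rightarrow> 'v \<Rightarrow> bool) \<Rightarrow> 'v \<Rightarrow> 'v \<Rightarrow> 'v set set" where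
  "sep E x y = {H \<in> halfspaces E. x \<notin> H \<and> y \<in> H}"

definition aut_action :: "('g, 'b) monoid_scheme \<Rightarrow> ('v \<Rightarrow> 'v \<Rightarrow> bool) \<Rightarrow> ('g \<Rightarrow> 'v \<Rightarrow> 'v) \<Rightarrow> bool" where
  "aut_action G E act \<longleftrightarrow> group G \<and>
     (\<forall>g\<in>carrier G. bij (act g) \<and> (\<forall>x y. E x y \<longleftrightarrow> E (act g x) (act g y))) \<and>
     act \<one>\<^bsub>G\<^esub> = id \<and>
     (\<forall>g\<in>carrier G. \<forall>h\<in>carrier G. act (g \<otimes>\<^bsub>G\<^esub> h) = act g \<circ> act h)"

definition non_transverse :: "('g, 'b) monoid_scheme \<Rightarrow> ('v \<Rightarrow> 'v \<Rightarrow> bool) \<Rightarrow> ('g \<Rightarrow> 'v \<Rightarrow> 'v) \<Rightarrow> bool" where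
  "non_transverse G E act \<longleftrightarrow>
     \<not> (\<exists>H\<in>halfspaces E. \<exists>h\<in>carrier G. transverse H (act h ` H))"

definition copy :: "('g \<Rightarrow> 'v \<Rightarrow> 'v) \<Rightarrow> 'g \<Rightarrow> 'v set list \<Rightarrow> 'v set list" where
  "copy act h s = map (\<lambda>H. act h ` H) s"

definition cnt :: "('g, 'b) monoid_scheme \<Rightarrow> ('v \<Rightarrow> 'v \<Rightarrow> bool) \<Rightarrow> ('g \<Rightarrow> 'v \<Rightarrow> 'v)
    \<Rightarrow> 'v set list \<Rightarrow> 'v \<Rightarrow> 'v \<Rightarrow> nat" where
  "cnt G E act s x y = Max {card S | S.
      S \<subseteq> {copy act h s | h. h \<in> carrier G} \<and>
      (\<forall>t\<in>S. set t \<subseteq> sep E x y) \<and>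
      (\<forall>t\<in>S. \<forall>u\<in>S. t \<noteq> u \<longrightarrow> \<not> overlap t u)}"

definition omega :: "('g, 'b) monoid_scheme \<Rightarrow> ('v \<Rightarrow> 'v \<Rightarrow> bool) \<Rightarrow> ('g \<Rightarrow> 'v \<Rightarrow> 'v)
    \<Rightarrow> 'v set list \<Rightarrow> 'v \<Rightarrow> 'v \<Rightarrow> int" where
  "omega G E act s x y = int (cnt G E act s x y) - int (cnt G E act (rev_segment s) x y)"

end

theory Submission
  imports Defs
begin


locale qmor = group G for G (structure) +
  fixes \<phi> :: "'a \<Rightarrow> real" and D :: real
  assumes D0: "0 \<le> D"
    and qm: "\<And>g h. g \<in> carrier G \<Longrightarrow> h \<in> carrier G \<Longrightarrow> \<bar>\<phi> (g \<otimes> h) - \<phi> g - \<phi> h\<bar> \<le> D"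
    and one: "\<phi> \<one> = 0"
    and anti: "\<And>g. g \<in> carrier G \<Longrightarrow> \<phi> (inv g) = - \<phi> g"
begin

lemma pow_mult_bound:
  assumes g: "g \<in> carrier G"
  shows "\<bar>\<phi> (g [^] (m * n)) - real m * \<phi> (g [^] n)\<bar> \<le> real m * D"
proof (induction m)
  case 0 then show ?case by (simp add: one)
next
  case (Suc m)
  have e: "g [^] (Suc m * n) = g [^] (m * n) \<otimes> g [^] n"
    using g by (simp add: nat_pow_mult add.commute)
  have "\<bar>\<phi> (g [^] (m * n) \<otimes> g [^] n) - \<phi> (g [^] (m * n)) - \<phi> (g [^] n)\<bar> \<le> D"
    using g by (intro qm) auto
  then show ?case using Suc e by (simp add: algebra_simps)
qed

definition seq :: "'a \<Rightarrow> nat \<Rightarrow> real" where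
  "seq g n = \<phi> (g [^] n) / real n"

lemma div_bound:
  fixes X m n E :: real
  assumes "\<bar>X\<bar> \<le> m * E" "m > 0" "n > 0"
  shows "\<bar>X / (m * n)\<bar> \<le> E / n"
proof -
  have "\<bar>X / (m * n)\<bar> = \<bar>X\<bar> / (m * n)" using assms by (simp add: abs_divide abs_mult)
  also have "\<dots> \<le> (m * E) / (m * n)" using assms by (intro divide_right_mono) auto
  also have "\<dots> = E / n" using assms by simp
  finally show ?thesis .
qed

lemma div_eq:
  fixes Y Z m n :: real
  assumes "m > 0" "n > 0"
  shows "Y / (m * n) - Z / n = (Y - m * Z) / (m * n)"
proof -
  have "Z / n = (m * Z) / (m * n)" using assms by simp
  then show ?thesis by (simp add: diff_divide_distrib)
qed

lemma seq_close:
  assumes g: "g \<in> carrier G" and m: "m \<ge> 1" and n: "n \<ge> 1"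
  shows "\<bar>seq g m - seq g n\<bar> \<le> D / m + D / n"
proof -
  have b1: "\<bar>\<phi> (g [^] (m * n)) - real m * \<phi> (g [^] n)\<bar> \<le> real m * D"
    using pow_mult_bound[OF g] .
  have b2: "\<bar>\<phi> (g [^] (n * m)) - real n * \<phi> (g [^] m)\<bar> \<le> real n * D"
    using pow_mult_bound[OF g] .
  have mn: "m * n = n * m" by simp
  have mpos: "real m > 0" and npos: "real n > 0" using m n by auto
  have c1: "\<bar>\<phi> (g [^] (m * n)) / (real m * real n) - seq g n\<bar> \<le> D / n"
    unfolding seq_def div_eq[OF mpos npos] using div_bound[OF b1 mpos npos] .
  have c2: "\<bar>\<phi> (g [^] (n * m)) / (real n * real m) - seq g m\<bar> \<le> D / m"
    unfolding seq_def div_eq[OF npos mpos] using div_bound[OF b2 npos mpos] .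
  have "\<phi> (g [^] (n * m)) / (real n * real m) = \<phi> (g [^] (m * n)) / (real m * real n)"
    by (simp add: mult.commute)
  then show ?thesis using c1 c2 by linarith
qed

lemma seq_Cauchy:
  assumes g: "g \<in> carrier G"
  shows "Cauchy (seq g)"
proof (rule metric_CauchyI)
  fix e :: real assume e: "e > 0"
  obtain M :: nat where M: "2 * D / e < real M" using reals_Archimedean2 by blast
  define M' where "M' = Suc M"
  show "\<exists>M. \<forall>m\<ge>M. \<forall>n\<ge>M. dist (seq g m) (seq g n) < e"
  proof (intro exI allI impI)
    fix m n assume m: "m \<ge> M'" and n: "n \<ge> M'"
    have m1: "m \<ge> 1" and n1: "n \<ge> 1" using m n by (auto simp: M'_def)
    have "D / m \<le> D / M'" using m D0 M'_def by (intro divide_left_mono) auto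
    moreover have "D / n \<le> D / M'" using n D0 M'_def by (intro divide_left_mono) auto
    moreover have "2 * D / M' < e"
    proof -
      have "2 * D < e * real M'" using M e M'_def by (simp add: field_simps) 
      then show ?thesis using M'_def by (simp add: field_simps)
    qed
    ultimately show "dist (seq g m) (seq g n) < e"
      using seq_close[OF g m1 n1] by (simp add: dist_real_def)
  qed
qed

lemma seq_conv: "g \<in> carrier G \<Longrightarrow> convergent (seq g)"
  using seq_Cauchy Cauchy_convergent_iff by blast

definition psi :: "'a \<Rightarrow> real" where "psi g = lim (seq g)"

lemma psi_bound:
  assumes g: "g \<in> carrier G"
  shows "\<bar>real n * psi g - \<phi> (g [^] n)\<bar> \<le> D"
proof (cases "n = 0")
  case True then show ?thesis using D0 by (simp add: one)
next
  case False
  then have n1: "n \<ge> 1" by simp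
  have lim: "seq g \<longlonglongrightarrow> psi g" using seq_conv[OF g] by (simp add: psi_def convergent_LIMSEQ_iff)
  have l1: "(\<lambda>m. \<bar>seq g m - seq g n\<bar>) \<longlonglongrightarrow> \<bar>psi g - seq g n\<bar>"
    by (intro tendsto_intros lim)
  have l2: "(\<lambda>m. D / real m + D / real n) \<longlonglongrightarrow> 0 + D / real n"
    by (intro tendsto_intros tendsto_divide_0[OF tendsto_const] filterlim_real_sequentially)
  have "\<bar>psi g - seq g n\<bar> \<le> 0 + D / real n"
    using l1 l2 by (rule LIMSEQ_le) (use seq_close[OF g _ n1] in \<open>auto intro!: exI[of _ 1]\<close>)
  then have "real n * \<bar>psi g - seq g n\<bar> \<le> D" using n1 by (simp add: field_simps)
  moreover have "real n * \<bar>psi g - seq g n\<bar> = \<bar>real n * psi g - \<phi> (g [^] n)\<bar>"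
  proof -
    have "real n * (psi g - seq g n) = real n * psi g - \<phi> (g [^] n)"
      using n1 by (simp add: seq_def field_simps)
    then show ?thesis by (metis abs_mult abs_of_nat)
  qed
  ultimately show ?thesis by simp
qed

lemma zero_if_bounded:
  fixes x C :: real
  assumes "\<And>k::nat. real k * \<bar>x\<bar> \<le> C"
  shows "x = 0"
proof (rule ccontr)
  assume "x \<noteq> 0"
  then have xp: "\<bar>x\<bar> > 0" by simp
  obtain k :: nat where "C / \<bar>x\<bar> < real k" using reals_Archimedean2 by blast
  then have "C < real k * \<bar>x\<bar>" using xp by (simp add: field_simps)
  with assms[of k] show False by simp
qed

lemma psi_pow_nat:
  assumes g: "g \<in> carrier G"
  shows "psi (g [^] (n::nat)) = real n * psi g"
proof -
  have "\<And>k::nat. real k * \<bar>psi (g [^] n) - real n * psi g\<bar> \<le> 2 * D"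
  proof -
    fix k :: nat
    have a: "\<bar>real k * psi (g [^] n) - \<phi> ((g [^] n) [^] k)\<bar> \<le> D"
      using psi_bound g by auto
    have b: "\<bar>real (n * k) * psi g - \<phi> (g [^] (n * k))\<bar> \<le> D"
      using psi_bound[OF g, of "n * k"] by simp
    have "(g [^] n) [^] k = g [^] (n * k)" using g by (simp add: nat_pow_pow)
    then have "\<bar>real k * psi (g [^] n) - real k * (real n * psi g)\<bar> \<le> 2 * D"
      using a b by (simp add: algebra_simps)
    then show "real k * \<bar>psi (g [^] n) - real n * psi g\<bar> \<le> 2 * D"
      by (metis abs_mult abs_of_nat right_diff_distrib)
  qed
  then have "psi (g [^] n) - real n * psi g = 0" by (rule zero_if_bounded)
  then show ?thesis by simp
qed

lemma psi_inv:
  assumes g: "g \<in> carrier G"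
  shows "psi (inv g) = - psi g"
proof -
  have "seq (inv g) = (\<lambda>n. - seq g n)"
    using g by (auto simp: seq_def nat_pow_inv anti)
  moreover have "(\<lambda>n. - seq g n) \<longlonglongrightarrow> - psi g"
    using seq_conv[OF g] by (intro tendsto_intros) (simp add: psi_def convergent_LIMSEQ_iff)
  ultimately show ?thesis by (simp add: psi_def limI)
qed

lemma psi_pow_int:
  assumes g: "g \<in> carrier G"
  shows "psi (g [^] (n::int)) = real_of_int n * psi g"
proof (cases "n < 0")
  case True
  have e: "g [^] n = inv (g [^] (nat (- n)))" using True int_pow_def2[of G g n] by argo
  have "psi (g [^] n) = - psi (g [^] (nat (- n)))" unfolding e
    by (rule psi_inv) (use g in simp)
  also have "\<dots> = - (real (nat (- n)) * psi g)" using psi_pow_nat[OF g] by simp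
  also have "\<dots> = real_of_int n * psi g" using True by simp
  finally show ?thesis .
next
  case False
  have e: "g [^] n = g [^] (nat n)" using False int_pow_def2[of G g n] by argo
  have "psi (g [^] n) = real (nat n) * psi g" unfolding e using psi_pow_nat[OF g] .
  also have "\<dots> = real_of_int n * psi g" using False by simp
  finally show ?thesis .
qed

lemma cancel1: "x \<in> carrier G \<Longrightarrow> y \<in> carrier G \<Longrightarrow> inv x \<otimes> (x \<otimes> y) = y"
  by (simp add: m_assoc[symmetric])
lemma cancel2: "x \<in> carrier G \<Longrightarrow> y \<in> carrier G \<Longrightarrow> x \<otimes> (inv x \<otimes> y) = y"
  by (simp add: m_assoc[symmetric])

lemma w_step:
  fixes N :: nat
  assumes a: "a \<in> carrier G" and b: "b \<in> carrier G"
  defines "u \<equiv> a [^] N \<otimes> a \<otimes> a \<otimes> b \<otimes> inv (a [^] N)"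
    and "v \<equiv> a [^] N \<otimes> b [^] N \<otimes> inv a \<otimes> inv (a [^] N)"
  shows "a [^] Suc (Suc N) \<otimes> b [^] Suc (Suc N) \<otimes> inv ((a \<otimes> b) [^] Suc (Suc N))
       = ((u \<otimes> v) \<otimes> (inv u \<otimes> inv v)) \<otimes> (a [^] N \<otimes> b [^] N \<otimes> inv ((a \<otimes> b) [^] N))"
proof -
  have bb: "b [^] Suc (Suc N) = b \<otimes> b [^] N \<otimes> b"
  proof -
    have "b [^] N \<otimes> b = b \<otimes> b [^] N" using nat_pow_Suc2[OF b, of N] by simp
    then show ?thesis using b by simp
  qed
  show ?thesis
    unfolding u_def v_def bb
    using a b by (simp add: m_assoc inv_mult_group cancel1 cancel2)
qed

lemma comm_bound:
  assumes u: "u \<in> carrier G" and v: "v \<in> carrier G"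
  shows "\<bar>\<phi> ((u \<otimes> v) \<otimes> (inv u \<otimes> inv v))\<bar> \<le> 3 * D"
proof -
  have e: "inv u \<otimes> inv v = inv (v \<otimes> u)" using u v by (simp add: inv_mult_group)
  have q1: "\<bar>\<phi> ((u \<otimes> v) \<otimes> inv (v \<otimes> u)) - \<phi> (u \<otimes> v) - \<phi> (inv (v \<otimes> u))\<bar> \<le> D"
    using u v by (intro qm) auto
  have q2: "\<bar>\<phi> (u \<otimes> v) - \<phi> u - \<phi> v\<bar> \<le> D" using u v by (intro qm) auto
  have q3: "\<bar>\<phi> (v \<otimes> u) - \<phi> v - \<phi> u\<bar> \<le> D" using u v by (intro qm) auto
  have "\<phi> (inv (v \<otimes> u)) = - \<phi> (v \<otimes> u)" using u v by (intro anti) auto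
  then show ?thesis unfolding e using q1 q2 q3 by linarith
qed

definition wd :: "'a \<Rightarrow> 'a \<Rightarrow> nat \<Rightarrow> 'a" where
  "wd a b N = a [^] N \<otimes> b [^] N \<otimes> inv ((a \<otimes> b) [^] N)"

lemma wd_closed: "a \<in> carrier G \<Longrightarrow> b \<in> carrier G \<Longrightarrow> wd a b N \<in> carrier G"
  by (simp add: wd_def)

lemma wd_bound:
  assumes a: "a \<in> carrier G" and b: "b \<in> carrier G"
  shows "\<bar>\<phi> (wd a b N)\<bar> \<le> 2 * real N * D"
proof (induction N rule: less_induct)
  case (less N)
  show ?case
  proof (cases N)
    case 0
    then show ?thesis using a b by (simp add: wd_def one)
  next
    case (Suc M)
    show ?thesis
    proof (cases M)
      case 0
      then show ?thesis using Suc a b D0 by (simp add: wd_def one)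
    next
      case (Suc K)
      define u where "u = a [^] K \<otimes> a \<otimes> a \<otimes> b \<otimes> inv (a [^] K)"
      define v where "v = a [^] K \<otimes> b [^] K \<otimes> inv a \<otimes> inv (a [^] K)"
      have uc: "u \<in> carrier G" and vc: "v \<in> carrier G" using a b by (auto simp: u_def v_def)
      have NK: "N = Suc (Suc K)" using Suc \<open>N = Suc M\<close> by simp
      have e: "wd a b N = ((u \<otimes> v) \<otimes> (inv u \<otimes> inv v)) \<otimes> wd a b K"
        unfolding NK wd_def u_def v_def by (rule w_step[OF a b])
      have IH: "\<bar>\<phi> (wd a b K)\<bar> \<le> 2 * real K * D" using less NK by simp
      have cb: "\<bar>\<phi> ((u \<otimes> v) \<otimes> (inv u \<otimes> inv v))\<bar> \<le> 3 * D" by (rule comm_bound[OF uc vc])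
      have q: "\<bar>\<phi> (((u \<otimes> v) \<otimes> (inv u \<otimes> inv v)) \<otimes> wd a b K) - \<phi> ((u \<otimes> v) \<otimes> (inv u \<otimes> inv v)) - \<phi> (wd a b K)\<bar> \<le> D"
        using uc vc a b by (intro qm) (auto simp: wd_closed)
      have "real N = real K + 2" using NK by simp
      then show ?thesis unfolding e using IH cb q D0 by (simp add: algebra_simps)
    qed
  qed
qed

lemma nonpos_if_bounded:
  fixes x C :: real
  assumes "\<And>N::nat. N \<ge> 1 \<Longrightarrow> real N * x \<le> C"
  shows "x \<le> 0"
proof (rule ccontr)
  assume "\<not> x \<le> 0"
  then have xp: "x > 0" by simp
  obtain k :: nat where k: "max C 0 / x < real k" using reals_Archimedean2 by blast
  then have k1: "k \<ge> 1" using xp by (cases k) (auto simp: field_simps)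
  have "max C 0 < real k * x" using k xp by (simp add: field_simps)
  with assms[OF k1] show False by simp
qed

lemma psi_defect:
  assumes a: "a \<in> carrier G" and b: "b \<in> carrier G"
  shows "\<bar>psi (a \<otimes> b) - psi a - psi b\<bar> \<le> 2 * D"
proof -
  have "\<bar>psi (a \<otimes> b) - psi a - psi b\<bar> - 2 * D \<le> 0"
  proof (rule nonpos_if_bounded[where C = "5 * D"])
    fix N :: nat assume N: "N \<ge> 1"
    have ab: "a \<otimes> b \<in> carrier G" using a b by simp
    have e: "a [^] N \<otimes> b [^] N = wd a b N \<otimes> (a \<otimes> b) [^] N"
      using a b by (simp add: wd_def m_assoc)
    have q1: "\<bar>\<phi> (wd a b N \<otimes> (a \<otimes> b) [^] N) - \<phi> (wd a b N) - \<phi> ((a \<otimes> b) [^] N)\<bar> \<le> D"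
      using a b by (intro qm) (auto simp: wd_closed)
    have q2: "\<bar>\<phi> (a [^] N \<otimes> b [^] N) - \<phi> (a [^] N) - \<phi> (b [^] N)\<bar> \<le> D"
      using a b by (intro qm) auto
    have wb: "\<bar>\<phi> (wd a b N)\<bar> \<le> 2 * real N * D" by (rule wd_bound[OF a b])
    have p1: "\<bar>real N * psi a - \<phi> (a [^] N)\<bar> \<le> D" by (rule psi_bound[OF a])
    have p2: "\<bar>real N * psi b - \<phi> (b [^] N)\<bar> \<le> D" by (rule psi_bound[OF b])
    have p3: "\<bar>real N * psi (a \<otimes> b) - \<phi> ((a \<otimes> b) [^] N)\<bar> \<le> D" by (rule psi_bound[OF ab])
    have "\<bar>real N * (psi (a \<otimes> b) - psi a - psi b)\<bar> \<le> 2 * real N * D + 5 * D"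
      using q1 q2 wb p1 p2 p3 unfolding e[symmetric] by (simp add: algebra_simps)
    moreover have "\<bar>real N * (psi (a \<otimes> b) - psi a - psi b)\<bar> = real N * \<bar>psi (a \<otimes> b) - psi a - psi b\<bar>"
      by (simp add: abs_mult)
    ultimately show "real N * (\<bar>psi (a \<otimes> b) - psi a - psi b\<bar> - 2 * D) \<le> 5 * D"
      by (simp add: right_diff_distrib)
  qed
  then show ?thesis by simp
qed

end


lemma ivt_nat: "\<not> P (0::nat) \<Longrightarrow> P n \<Longrightarrow> \<exists>i<n. \<not> P i \<and> P (Suc i)"
proof (induction n)
  case 0 then show ?case by simp
next
  case (Suc n)
  then show ?case by (cases "P n") (auto intro: less_SucI)
qed

locale mgraph =
  fixes E :: "'v \<Rightarrow> 'v \<Rightarrow> bool"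
  assumes mg: "median_graph E"
begin

lemma esym: "E x y \<Longrightarrow> E y x" using mg by (auto simp: median_graph_def)
lemma irr: "\<not> E x x" using mg by (auto simp: median_graph_def)
lemma conn: "\<exists>p. walk E p \<and> hd p = x \<and> last p = y" using mg by (auto simp: median_graph_def)
lemma median_ex: "\<exists>m. m \<in> interval E x y \<and> m \<in> interval E y z \<and> m \<in> interval E x z"
  using mg unfolding median_graph_def by blast

lemma gdist_walk: "\<exists>p. walk E p \<and> hd p = x \<and> last p = y \<and> length p = Suc (gdist E x y)"
proof -
  obtain p where p: "walk E p" "hd p = x" "last p = y" using conn by blast
  then have "p \<noteq> []" by (simp add: walk_def)
  then have "length p = Suc (length p - 1)" by simp
  with p have ex: "\<exists>n. \<exists>p. walk E p \<and> hd p = x \<and> last p = y \<and> length p = Suc n" by blast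
  show ?thesis unfolding gdist_def by (rule LeastI_ex[OF ex])
qed

lemma gdist_le: "walk E p \<Longrightarrow> hd p = x \<Longrightarrow> last p = y \<Longrightarrow> length p = Suc n \<Longrightarrow> gdist E x y \<le> n"
  unfolding gdist_def by (rule Least_le) blast

lemma gdist_self: "gdist E x x = 0"
proof -
  have "walk E [x]" by (simp add: walk_def)
  then show ?thesis using gdist_le[of "[x]" x x 0] by simp
qed

lemma gdist_0: "gdist E x y = 0 \<Longrightarrow> x = y"
proof -
  assume "gdist E x y = 0"
  then obtain p where p: "walk E p" "hd p = x" "last p = y" "length p = Suc 0"
    using gdist_walk[of x y] by auto
  then obtain q where "p = [q]" by (cases p) auto
  then show "x = y" using p by simp
qed

lemma gdist_edge: "E a b \<Longrightarrow> gdist E a b = 1"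
proof -
  assume e: "E a b"
  have "walk E [a, b]" using e by (auto simp: walk_def less_Suc_eq)
  then have "gdist E a b \<le> 1" using gdist_le[of "[a,b]" a b 1] by simp
  moreover have "a \<noteq> b" using e irr by auto
  then have "gdist E a b \<noteq> 0" using gdist_0 by auto
  ultimately show ?thesis by simp
qed

lemma interval_edge: "E a b \<Longrightarrow> z \<in> interval E a b \<Longrightarrow> z = a \<or> z = b"
proof -
  assume e: "E a b" and z: "z \<in> interval E a b"
  then have "gdist E a z + gdist E z b = 1" by (simp add: interval_def gdist_edge)
  then have "gdist E a z = 0 \<or> gdist E z b = 0" by arith
  then show ?thesis using gdist_0 by auto
qed

lemma edge_halfspace:
  assumes H: "H \<in> halfspaces E" and e: "E a b" and a: "a \<notin> H" and b: "b \<in> H"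
  shows "H = {z. gdist E b z < gdist E a z}"
proof -
  have cH: "gconvex E H" and cC: "gconvex E (- H)" using H by (auto simp: halfspaces_def)
  have ab: "gdist E a b = 1" using e by (rule gdist_edge)
  have ba: "gdist E b a = 1" using esym[OF e] by (rule gdist_edge)
  have key: "z \<in> H \<longleftrightarrow> z \<in> {z. gdist E b z < gdist E a z}" for z
  proof -
    obtain m where m: "m \<in> interval E a b" "m \<in> interval E b z" "m \<in> interval E a z"
      using median_ex by blast
    have "m = a \<or> m = b" using interval_edge[OF e m(1)] .
    moreover
    { assume "z \<in> H"
      have "m \<noteq> a"
      proof
        assume "m = a"
        then have "a \<in> interval E b z" using m by simp
        then have "a \<in> H" using cH b \<open>z \<in> H\<close> unfolding gconvex_def by blast
        then show False using a by simp
      qed }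
    moreover
    { assume "z \<notin> H"
      have "m \<noteq> b"
      proof
        assume "m = b"
        then have "b \<in> interval E a z" using m by simp
        then have "b \<in> - H" using cC a \<open>z \<notin> H\<close> unfolding gconvex_def by blast
        then show False using b by simp
      qed }
    ultimately have c: "(z \<in> H \<longrightarrow> m = b) \<and> (z \<notin> H \<longrightarrow> m = a)" by blast
    show "z \<in> H \<longleftrightarrow> z \<in> {z. gdist E b z < gdist E a z}"
    proof
      assume "z \<in> H"
      then have "b \<in> interval E a z" using c m by simp
      then show "z \<in> {z. gdist E b z < gdist E a z}" using ab by (simp add: interval_def)
    next
      assume zz: "z \<in> {z. gdist E b z < gdist E a z}"
      show "z \<in> H"
      proof (rule ccontr)
        assume "z \<notin> H"
        then have "a \<in> interval E b z" using c m by simp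
        then show False using ba zz by (simp add: interval_def)
      qed
    qed
  qed
  then show ?thesis by blast
qed

lemma sep_finite: "finite (sep E x y)"
proof -
  obtain p where p: "walk E p" "hd p = x" "last p = y" using conn by blast
  have ne: "p \<noteq> []" using p by (simp add: walk_def)
  have "sep E x y \<subseteq> (\<lambda>i. {z. gdist E (p ! Suc i) z < gdist E (p ! i) z}) ` {i. Suc i < length p}"
  proof
    fix H assume H: "H \<in> sep E x y"
    then have Hh: "H \<in> halfspaces E" and xH: "x \<notin> H" and yH: "y \<in> H" by (auto simp: sep_def)
    have "\<not> (p ! 0 \<in> H)" using xH p(2) ne by (simp add: hd_conv_nth)
    moreover have "p ! (length p - 1) \<in> H" using yH p(3) ne by (simp add: last_conv_nth)
    ultimately obtain i where i: "i < length p - 1" "p ! i \<notin> H" "p ! Suc i \<in> H"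
      using ivt_nat[of "\<lambda>i. p ! i \<in> H" "length p - 1"] by blast
    have "E (p ! i) (p ! Suc i)" using p(1) i(1) by (simp add: walk_def)
    then have "H = {z. gdist E (p ! Suc i) z < gdist E (p ! i) z}"
      using edge_halfspace[OF Hh _ i(2) i(3)] by simp
    then show "H \<in> (\<lambda>i. {z. gdist E (p ! Suc i) z < gdist E (p ! i) z}) ` {i. Suc i < length p}"
      using i(1) by auto
  qed
  moreover have "finite {i. Suc i < length p}"
    by (rule finite_subset[of _ "{..<length p}"]) auto
  ultimately show ?thesis using finite_subset by blast
qed

lemma halfspace_compl: "H \<in> halfspaces E \<Longrightarrow> - H \<in> halfspaces E"
  by (auto simp: halfspaces_def)

lemma median_sep:
  assumes m: "m \<in> interval E a b" and H: "H \<in> halfspaces E"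
  shows "(a \<notin> H \<and> b \<notin> H \<longrightarrow> m \<notin> H) \<and> (a \<in> H \<and> b \<in> H \<longrightarrow> m \<in> H)"
  using m H unfolding halfspaces_def gconvex_def by blast

end

locale ccx = mgraph E for E :: "'v \<Rightarrow> 'v \<Rightarrow> bool" +
  fixes G :: "('g, 'b) monoid_scheme" (structure) and act :: "'g \<Rightarrow> 'v \<Rightarrow> 'v"
  assumes aa: "aut_action G E act"
begin

lemma aa': "group G \<and>
     (\<forall>g\<in>carrier G. bij (act g) \<and> (\<forall>x y. E x y \<longleftrightarrow> E (act g x) (act g y))) \<and>
     act \<one> = id \<and>
     (\<forall>g\<in>carrier G. \<forall>h\<in>carrier G. act (g \<otimes> h) = act g \<circ> act h)"
  using aa unfolding aut_action_def .
lemma grp: "group G" using aa' by blast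
lemma act_bij: "g \<in> carrier G \<Longrightarrow> bij (act g)" using aa' by blast
lemma act_inj: "g \<in> carrier G \<Longrightarrow> inj (act g)" using act_bij bij_is_inj by blast
lemma act_edge: "g \<in> carrier G \<Longrightarrow> E x y \<longleftrightarrow> E (act g x) (act g y)" using aa' by blast
lemma act_one: "act \<one> = id" using aa' by blast
lemma act_mult: "g \<in> carrier G \<Longrightarrow> h \<in> carrier G \<Longrightarrow> act (g \<otimes> h) = act g \<circ> act h"
  using aa' by blast
lemma inv_c: "g \<in> carrier G \<Longrightarrow> inv g \<in> carrier G" using grp by (simp add: group.inv_closed)

lemma act_inv1: "g \<in> carrier G \<Longrightarrow> act (inv g) (act g x) = x"
proof -
  assume g: "g \<in> carrier G"
  have "act (inv g \<otimes> g) = act \<one>" using g grp by (simp add: group.l_inv)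
  then have "act (inv g) \<circ> act g = id" using act_mult[OF inv_c[OF g] g] act_one by simp
  then show ?thesis by (metis comp_apply id_apply)
qed

lemma act_inv2: "g \<in> carrier G \<Longrightarrow> act g (act (inv g) x) = x"
proof -
  assume g: "g \<in> carrier G"
  have "act (g \<otimes> inv g) = act \<one>" using g grp by (simp add: group.r_inv)
  then have "act g \<circ> act (inv g) = id" using act_mult[OF g inv_c[OF g]] act_one by simp
  then show ?thesis by (metis comp_apply id_apply)
qed

lemma walk_map: "g \<in> carrier G \<Longrightarrow> walk E p \<Longrightarrow> walk E (map (act g) p)"
  unfolding walk_def
proof (intro conjI allI impI)
  fix i assume g: "g \<in> carrier G" and w: "p \<noteq> [] \<and> (\<forall>i. Suc i < length p \<longrightarrow> E (p ! i) (p ! Suc i))"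
    and i: "Suc i < length (map (act g) p)"
  then have "E (p ! i) (p ! Suc i)" by simp
  then have "E (act g (p ! i)) (act g (p ! Suc i))" using act_edge[OF g] by blast
  then show "E (map (act g) p ! i) (map (act g) p ! Suc i)" using i by simp
next
  assume "p \<noteq> [] \<and> (\<forall>i. Suc i < length p \<longrightarrow> E (p ! i) (p ! Suc i))"
  then show "map (act g) p \<noteq> []" by simp
qed

lemma gdist_act_le: "g \<in> carrier G \<Longrightarrow> gdist E (act g x) (act g y) \<le> gdist E x y"
proof -
  assume g: "g \<in> carrier G"
  obtain p where p: "walk E p" "hd p = x" "last p = y" "length p = Suc (gdist E x y)"
    using gdist_walk by blast
  have ne: "p \<noteq> []" using p by (simp add: walk_def)
  show ?thesis
    by (rule gdist_le[OF walk_map[OF g p(1)]]) (use p ne in \<open>auto simp: hd_map last_map\<close>)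
qed

lemma gdist_act: "g \<in> carrier G \<Longrightarrow> gdist E (act g x) (act g y) = gdist E x y"
proof -
  assume g: "g \<in> carrier G"
  have "gdist E (act (inv g) (act g x)) (act (inv g) (act g y)) \<le> gdist E (act g x) (act g y)"
    by (rule gdist_act_le[OF inv_c[OF g]])
  then show ?thesis using gdist_act_le[OF g, of x y] act_inv1[OF g] by simp
qed

lemma interval_act: "g \<in> carrier G \<Longrightarrow> z \<in> interval E x y \<Longrightarrow> act g z \<in> interval E (act g x) (act g y)"
  by (simp add: interval_def gdist_act)

lemma convex_act:
  assumes g: "g \<in> carrier G" and C: "gconvex E C"
  shows "gconvex E (act g ` C)"
  unfolding gconvex_def
proof (intro ballI subsetI)
  fix u v w assume u: "u \<in> act g ` C" and v: "v \<in> act g ` C" and w: "w \<in> interval E u v"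
  obtain u' v' where u': "u' \<in> C" "u = act g u'" and v': "v' \<in> C" "v = act g v'" using u v by blast
  have "act (inv g) w \<in> interval E (act (inv g) u) (act (inv g) v)"
    by (rule interval_act[OF inv_c[OF g] w])
  then have "act (inv g) w \<in> interval E u' v'" using u' v' act_inv1[OF g] by simp
  then have "act (inv g) w \<in> C" using C u' v' unfolding gconvex_def by blast
  then show "w \<in> act g ` C" using act_inv2[OF g] by (metis image_eqI)
qed

lemma compl_act: "g \<in> carrier G \<Longrightarrow> act g ` (- H) = - (act g ` H)"
  using act_bij bij_image_Compl_eq by blast

lemma inv_image_act: "g \<in> carrier G \<Longrightarrow> act (inv g) ` act g ` H = H"
  using act_inv1 by (simp add: image_comp) 

lemma halfspace_act:
  assumes g: "g \<in> carrier G" and H: "H \<in> halfspaces E"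
  shows "act g ` H \<in> halfspaces E"
proof -
  have h: "H \<noteq> {}" "H \<noteq> UNIV" "gconvex E H" "gconvex E (- H)" using H by (auto simp: halfspaces_def)
  have "act g ` H \<noteq> UNIV"
  proof
    assume "act g ` H = UNIV"
    then have "act g ` (- H) = {}" using compl_act[OF g] by simp
    then show False using h(2) by auto
  qed
  moreover have "gconvex E (- (act g ` H))" using convex_act[OF g h(4)] compl_act[OF g] by simp
  ultimately show ?thesis using h convex_act[OF g h(3)] by (auto simp: halfspaces_def)
qed

lemma psub_act: "g \<in> carrier G \<Longrightarrow> act g ` B \<subset> act g ` A \<longleftrightarrow> B \<subset> A"
  unfolding psubset_eq using inj_image_subset_iff[OF act_inj] inj_image_eq_iff[OF act_inj] by simp

lemma tight_act:
  assumes g: "g \<in> carrier G" and t: "tightly_contains E A B"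
  shows "tightly_contains E (act g ` A) (act g ` B)"
proof -
  have t1: "B \<subset> A" and t2: "\<not> (\<exists>C\<in>halfspaces E. B \<subset> C \<and> C \<subset> A)"
    using t unfolding tightly_contains_def by (rule conjunct1, rule conjunct2)
  have gi: "inv g \<in> carrier G" using inv_c[OF g] .
  have s1: "act g ` B \<subset> act g ` A" using iffD2[OF psub_act[OF g] t1] .
  have s2: False if C: "C \<in> halfspaces E" "act g ` B \<subset> C" "C \<subset> act g ` A" for C
  proof -
    have "act (inv g) ` act g ` B \<subset> act (inv g) ` C" using iffD2[OF psub_act[OF gi] C(2)] .
    then have c1: "B \<subset> act (inv g) ` C" unfolding inv_image_act[OF g] .
    have "act (inv g) ` C \<subset> act (inv g) ` act g ` A" using iffD2[OF psub_act[OF gi] C(3)] .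
    then have c2: "act (inv g) ` C \<subset> A" unfolding inv_image_act[OF g] .
    have c3: "act (inv g) ` C \<in> halfspaces E" using halfspace_act[OF gi C(1)] .
    have "\<exists>C\<in>halfspaces E. B \<subset> C \<and> C \<subset> A" by (rule bexI[where P="\<lambda>C. B \<subset> C \<and> C \<subset> A", OF conjI[OF c1 c2] c3])
    then show False using t2 by (rule notE[rotated])
  qed
  show ?thesis unfolding tightly_contains_def
  proof (intro conjI notI s1)
    assume "\<exists>C\<in>halfspaces E. act g ` B \<subset> C \<and> C \<subset> act g ` A"
    then show False by (elim bexE conjE) (rule s2)
  qed
qed

lemma segment_copy:
  assumes g: "g \<in> carrier G" and s: "segment E s"
  shows "segment E (copy act g s)"
proof -
  have s1: "s \<noteq> []" "set s \<subseteq> halfspaces E"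
    "\<And>i. Suc i < length s \<Longrightarrow> tightly_contains E (s ! i) (s ! Suc i)"
    using s unfolding segment_def by auto
  have "set (copy act g s) \<subseteq> halfspaces E"
    using s1(2) halfspace_act[OF g] unfolding copy_def by auto
  moreover have "copy act g s \<noteq> []" using s1(1) unfolding copy_def by simp
  moreover have "tightly_contains E (copy act g s ! i) (copy act g s ! Suc i)"
    if "Suc i < length (copy act g s)" for i
    using that s1(3)[of i] tight_act[OF g] unfolding copy_def by simp
  ultimately show ?thesis unfolding segment_def by blast
qed

end


lemma nested_compl: "nested A B \<Longrightarrow> nested (- A) (- B)"
  unfolding nested_def by blast

lemma comparable:
  assumes "nested X Y" "u \<notin> X" "u \<notin> Y" "v \<in> X" "v \<in> Y"
  shows "X \<subseteq> Y \<or> Y \<subseteq> X"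
  using assms unfolding nested_def by blast

lemma nonoverlap_D:
  assumes "\<not> overlap t u" "A \<in> set t" "B \<in> set u"
  shows "A \<noteq> B" and "nested A B"
  using assms unfolding overlap_def transverse_def by auto

lemma seg_mono:
  assumes s: "segment E t" and j: "j < length t" and ij: "i \<le> j"
  shows "t ! j \<subseteq> t ! i"
  using j ij
proof (induction j)
  case 0 then show ?case by simp
next
  case (Suc j)
  show ?case
  proof (cases "i = Suc j")
    case True then show ?thesis by simp
  next
    case False
    then have ij: "i \<le> j" using Suc.prems by simp
    have "t ! j \<subseteq> t ! i" using Suc.IH[OF _ ij] Suc.prems by simp
    moreover have "tightly_contains E (t ! j) (t ! Suc j)" using s Suc.prems unfolding segment_def by blast
    then have "t ! Suc j \<subseteq> t ! j" unfolding tightly_contains_def by (simp add: less_imp_le)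
    ultimately show ?thesis by (rule subset_trans[rotated])
  qed
qed

lemma seg_hd_last:
  assumes s: "segment E t" and X: "X \<in> set t"
  shows "X \<subseteq> hd t" and "last t \<subseteq> X"
proof -
  have ne: "t \<noteq> []" using s by (simp add: segment_def)
  obtain k where k: "k < length t" "X = t ! k" using X by (auto simp: in_set_conv_nth)
  show "X \<subseteq> hd t" using seg_mono[OF s k(1), of 0] k ne by (simp add: hd_conv_nth)
  show "last t \<subseteq> X" using seg_mono[OF s _ , of "length t - 1" k] k ne by (simp add: last_conv_nth)
qed

lemma seg_tight:
  assumes s: "segment E t" and i: "Suc i < length t"
    and C: "C \<in> halfspaces E" "t ! Suc i \<subset> C" "C \<subset> t ! i"
  shows False
proof -
  have "tightly_contains E (t ! i) (t ! Suc i)" using s i unfolding segment_def by blast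
  then have "\<not> (\<exists>C\<in>halfspaces E. t ! Suc i \<subset> C \<and> C \<subset> t ! i)" unfolding tightly_contains_def by (rule conjunct2)
  moreover have "\<exists>C\<in>halfspaces E. t ! Suc i \<subset> C \<and> C \<subset> t ! i"
    by (rule bexI[where P="\<lambda>C. t ! Suc i \<subset> C \<and> C \<subset> t ! i", OF conjI[OF C(2) C(3)] C(1)])
  ultimately show False by (rule notE)
qed

lemma seg_gap:
  assumes s: "segment E t" and C: "C \<in> halfspaces E" and nC: "C \<notin> set t"
    and cmp: "\<And>X. X \<in> set t \<Longrightarrow> X \<subseteq> C \<or> C \<subseteq> X"
    and l: "last t \<subset> C" and h: "C \<subset> hd t"
  shows False
proof -
  have ne: "t \<noteq> []" using s by (simp add: segment_def)
  have all: "i < length t \<Longrightarrow> C \<subset> t ! i" for i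
  proof (induction i)
    case 0 then show ?case using h ne by (simp add: hd_conv_nth)
  next
    case (Suc i)
    have IH: "C \<subset> t ! i" using Suc by simp
    have mem: "t ! Suc i \<in> set t" using Suc.prems by simp
    have ne2: "t ! Suc i \<noteq> C" using mem nC by auto
    show ?case
    proof (cases "t ! Suc i \<subseteq> C")
      case True
      then have "t ! Suc i \<subset> C" using ne2 by auto
      then show ?thesis using seg_tight[OF s Suc.prems C] IH by simp
    next
      case False
      then have "C \<subseteq> t ! Suc i" using cmp[OF mem] by auto
      then show ?thesis using ne2 by auto
    qed
  qed
  have "C \<subset> t ! (length t - 1)" using all ne by simp
  then show False using l ne by (simp add: last_conv_nth)
qed

lemma seg_ivt:
  assumes s: "segment E t" and A: "A \<in> set t" "m \<in> A" and B: "B \<in> set t" "m \<notin> B"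
  shows "\<exists>i. Suc i < length t \<and> m \<in> t ! i \<and> m \<notin> t ! Suc i"
proof -
  have ne: "t \<noteq> []" using s by (simp add: segment_def)
  have "m \<in> t ! 0" using seg_hd_last(1)[OF s A(1)] A(2) ne by (auto simp: hd_conv_nth)
  moreover have "m \<notin> t ! (length t - 1)" using seg_hd_last(2)[OF s B(1)] B(2) ne by (auto simp: last_conv_nth)
  ultimately obtain i where "i < length t - 1" "\<not> m \<notin> t ! i" "m \<notin> t ! Suc i"
    using ivt_nat[of "\<lambda>i. m \<notin> t ! i" "length t - 1"] by blast
  then have "Suc i < length t \<and> m \<in> t ! i \<and> m \<notin> t ! Suc i" by auto
  then show ?thesis by blast
qed

context ccx
begin

definition valid :: "'v set list \<Rightarrow> 'v \<Rightarrow> 'v \<Rightarrow> 'v set list set \<Rightarrow> bool" where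
  "valid s x y S \<longleftrightarrow> S \<subseteq> {copy act h s | h. h \<in> carrier G} \<and>
      (\<forall>t\<in>S. set t \<subseteq> sep E x y) \<and>
      (\<forall>t\<in>S. \<forall>u\<in>S. t \<noteq> u \<longrightarrow> \<not> overlap t u)"

lemma cnt_valid: "cnt G E act s x y = Max {card S | S. valid s x y S}"
  unfolding cnt_def valid_def ..

lemma valid_card:
  assumes s: "s \<noteq> []" and V: "valid s x y S"
  shows "finite S \<and> card S \<le> card (sep E x y)"
proof -
  have ne: "t \<noteq> []" if "t \<in> S" for t
    using V that s unfolding valid_def copy_def by auto
  have inj: "inj_on hd S"
  proof (rule inj_onI)
    fix t u assume t: "t \<in> S" and u: "u \<in> S" and h: "hd t = hd u"
    show "t = u"
    proof (rule ccontr)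
      assume "t \<noteq> u"
      then have "\<not> overlap t u" using V t u unfolding valid_def by blast
      moreover have "overlap t u" unfolding overlap_def
        using h hd_in_set[OF ne[OF t]] hd_in_set[OF ne[OF u]] by metis
      ultimately show False by simp
    qed
  qed
  have sub: "hd ` S \<subseteq> sep E x y"
    using V ne unfolding valid_def by (auto dest!: hd_in_set)
  have fin: "finite (hd ` S)" using sub sep_finite finite_subset by blast
  have "finite S" using finite_imageD[OF fin inj] .
  moreover have "card S \<le> card (sep E x y)"
    using card_image[OF inj] card_mono[OF sep_finite sub] by simp
  ultimately show ?thesis by simp
qed

lemma cnt_props:
  assumes s: "s \<noteq> []"
  shows "\<And>S. valid s x y S \<Longrightarrow> card S \<le> cnt G E act s x y"
    and "\<exists>S. valid s x y S \<and> card S = cnt G E act s x y"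
proof -
  let ?K = "{card S | S. valid s x y S}"
  have fin: "finite ?K"
    by (rule finite_subset[of _ "{..card (sep E x y)}"]) (use valid_card[OF s] in auto)
  have "valid s x y {}" unfolding valid_def by simp
  then have nemp: "?K \<noteq> {}" by blast
  show "\<And>S. valid s x y S \<Longrightarrow> card S \<le> cnt G E act s x y"
    unfolding cnt_valid using fin by (auto intro: Max_ge)
  have "Max ?K \<in> ?K" using Max_in[OF fin nemp] .
  then show "\<exists>S. valid s x y S \<and> card S = cnt G E act s x y" unfolding cnt_valid by auto
qed

lemma cnt_transfer:
  assumes s: "s \<noteq> []" and s': "s' \<noteq> []" and inj: "inj f"
    and cp: "\<And>h. h \<in> carrier G \<Longrightarrow> \<exists>h'\<in>carrier G. f (copy act h s) = copy act h' s'"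
    and st: "\<And>t. set t \<subseteq> sep E x y \<Longrightarrow> set (f t) \<subseteq> sep E x' y'"
    and ov: "\<And>t u. overlap (f t) (f u) \<Longrightarrow> overlap t u"
  shows "cnt G E act s x y \<le> cnt G E act s' x' y'"
proof -
  obtain S where S: "valid s x y S" "card S = cnt G E act s x y" using cnt_props(2)[OF s] by blast
  have "valid s' x' y' (f ` S)"
    unfolding valid_def
  proof (intro conjI ballI impI)
    show "f ` S \<subseteq> {copy act h s' |h. h \<in> carrier G}"
    proof
      fix t' assume "t' \<in> f ` S"
      then obtain t where t: "t \<in> S" "t' = f t" by blast
      then obtain h where "h \<in> carrier G" "t = copy act h s" using S(1) unfolding valid_def by blast
      then show "t' \<in> {copy act h s' |h. h \<in> carrier G}" using cp t by fastforce
    qed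
  next
    fix t' assume "t' \<in> f ` S"
    then obtain t where t: "t \<in> S" "t' = f t" by blast
    then show "set t' \<subseteq> sep E x' y'" using st S(1) unfolding valid_def by blast
  next
    fix t' u' assume "t' \<in> f ` S" "u' \<in> f ` S" "t' \<noteq> u'"
    then obtain t u where tu: "t \<in> S" "u \<in> S" "t' = f t" "u' = f u" "t \<noteq> u" by blast
    then have "\<not> overlap t u" using S(1) unfolding valid_def by blast
    then show "\<not> overlap t' u'" using ov tu by blast
  qed
  then have "card (f ` S) \<le> cnt G E act s' x' y'" by (rule cnt_props(1)[OF s'])
  moreover have "card (f ` S) = card S" using inj by (simp add: card_image inj_on_subset)
  ultimately show ?thesis using S(2) by simp
qed

lemma rev_rev_seg: "rev_segment (rev_segment t) = t"
  by (simp add: rev_segment_def rev_map[symmetric])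

lemma copy_rev: "h \<in> carrier G \<Longrightarrow> copy act h (rev_segment s) = rev_segment (copy act h s)"
  by (simp add: copy_def rev_segment_def rev_map compl_act)

lemma set_rev_seg: "set (rev_segment t) = uminus ` set t"
  by (simp add: rev_segment_def)

lemma sep_compl: "H \<in> sep E x y \<Longrightarrow> - H \<in> sep E y x"
  by (simp add: sep_def halfspace_compl)

lemma overlap_rev: "overlap (rev_segment t) (rev_segment u) \<Longrightarrow> overlap t u"
  unfolding overlap_def set_rev_seg transverse_def using nested_compl by fastforce

lemma inj_rev_seg: "inj rev_segment"
  by (metis injI rev_rev_seg)

lemma cnt_rev:
  assumes s: "s \<noteq> []"
  shows "cnt G E act (rev_segment s) x y = cnt G E act s y x"
proof -
  have s': "rev_segment s \<noteq> []" using s by (simp add: rev_segment_def)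
  have st: "set (rev_segment t) \<subseteq> sep E b a" if "set t \<subseteq> sep E a b" for t a b
    using that sep_compl unfolding set_rev_seg by blast
  have "cnt G E act s y x \<le> cnt G E act (rev_segment s) x y"
    by (rule cnt_transfer[OF s s' inj_rev_seg]) (auto simp: copy_rev st overlap_rev)
  moreover have "cnt G E act (rev_segment s) x y \<le> cnt G E act s y x"
  proof (rule cnt_transfer[OF s' s inj_rev_seg])
    fix h assume "h \<in> carrier G"
    then show "\<exists>h'\<in>carrier G. rev_segment (copy act h (rev_segment s)) = copy act h' s"
      by (auto simp: copy_rev rev_rev_seg)
  qed (auto simp: st overlap_rev)
  ultimately show ?thesis by simp
qed

lemma inj_img: "inj f \<Longrightarrow> inj (image f)"
  by (rule injI) (simp add: inj_image_eq_iff)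

lemma nested_act: "g \<in> carrier G \<Longrightarrow> nested A B \<Longrightarrow> nested (act g ` A) (act g ` B)"
  unfolding nested_def compl_act[symmetric] by (auto intro: image_mono)

lemma overlap_act:
  assumes g: "g \<in> carrier G" and o: "overlap (copy act g t) (copy act g u)"
  shows "overlap t u"
proof -
  obtain A' B' where AB: "A' \<in> set (copy act g t)" "B' \<in> set (copy act g u)" "A' = B' \<or> transverse A' B'"
    using o unfolding overlap_def by blast
  obtain A B where "A \<in> set t" "B \<in> set u" "A' = act g ` A" "B' = act g ` B"
    using AB unfolding copy_def by auto
  moreover have "A = B \<or> transverse A B"
    using AB(3) nested_act[OF g] inj_image_eq_iff[OF act_inj[OF g]] calculation
    unfolding transverse_def by metis
  ultimately show ?thesis unfolding overlap_def by blast
qed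

lemma sep_act: "g \<in> carrier G \<Longrightarrow> H \<in> sep E x y \<Longrightarrow> act g ` H \<in> sep E (act g x) (act g y)"
  unfolding sep_def using halfspace_act inj_image_mem_iff[OF act_inj] by auto

lemma copy_copy: "g \<in> carrier G \<Longrightarrow> h \<in> carrier G \<Longrightarrow> copy act g (copy act h s) = copy act (g \<otimes> h) s"
  by (simp add: copy_def act_mult image_comp)

lemma cnt_act_le:
  assumes s: "s \<noteq> []" and g: "g \<in> carrier G"
  shows "cnt G E act s x y \<le> cnt G E act s (act g x) (act g y)"
proof (rule cnt_transfer[OF s s])
  show "inj (copy act g)" unfolding copy_def by (simp add: inj_img act_inj[OF g])
next
  fix h assume h: "h \<in> carrier G"
  show "\<exists>h'\<in>carrier G. copy act g (copy act h s) = copy act h' s"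
    using copy_copy[OF g h] g h grp by (metis group.subgroup_self subgroup.m_closed)
next
  fix t assume "set t \<subseteq> sep E x y"
  then show "set (copy act g t) \<subseteq> sep E (act g x) (act g y)"
    unfolding copy_def using sep_act[OF g] by auto
next
  fix t u assume "overlap (copy act g t) (copy act g u)"
  then show "overlap t u" by (rule overlap_act[OF g])
qed

lemma cnt_act:
  assumes s: "s \<noteq> []" and g: "g \<in> carrier G"
  shows "cnt G E act s (act g x) (act g y) = cnt G E act s x y"
proof -
  have "cnt G E act s (act g x) (act g y) \<le> cnt G E act s (act (inv g) (act g x)) (act (inv g) (act g y))"
    by (rule cnt_act_le[OF s inv_c[OF g]])
  then show ?thesis using cnt_act_le[OF s g, of x y] act_inv1[OF g] by simp
qed

end


locale ccg = ccx E G act for E :: "'v \<Rightarrow> 'v \<Rightarrow> bool" and G :: "('g, 'b) monoid_scheme" (structure) and act +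
  fixes \<gamma> :: "'v set list"
  assumes seg: "segment E \<gamma>" and nt: "non_transverse G E act"
begin

definition cps :: "'v set list set" where "cps = {copy act h \<gamma> | h. h \<in> carrier G}"

lemma gne: "\<gamma> \<noteq> []" using seg by (simp add: segment_def)

lemma cps_seg: "t \<in> cps \<Longrightarrow> segment E t"
  unfolding cps_def using segment_copy[OF _ seg] by blast

lemma translate:
  assumes h: "h \<in> carrier G" and k: "k \<in> carrier G" and X: "X \<in> halfspaces E"
  shows "nested (act h ` X) (act k ` X)"
proof -
  have H: "act h ` X \<in> halfspaces E" using halfspace_act[OF h X] .
  have g: "k \<otimes> inv h \<in> carrier G" using h k grp by (simp add: group.subgroup_self subgroup.m_closed inv_c)
  have "act (k \<otimes> inv h) ` (act h ` X) = act k ` (act (inv h) ` act h ` X)"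
    using act_mult[OF k inv_c[OF h]] by (simp add: image_comp)
  also have "\<dots> = act k ` X" using inv_image_act[OF h] by simp
  finally have e: "act (k \<otimes> inv h) ` (act h ` X) = act k ` X" .
  have "\<not> transverse (act h ` X) (act (k \<otimes> inv h) ` (act h ` X))"
    using nt H g unfolding non_transverse_def by blast
  then show ?thesis unfolding e transverse_def by simp
qed

lemma cps_hd_last:
  assumes t: "t \<in> cps" and u: "u \<in> cps"
  shows "nested (hd t) (hd u)" and "nested (last t) (last u)"
proof -
  obtain h k where h: "h \<in> carrier G" "t = copy act h \<gamma>" and k: "k \<in> carrier G" "u = copy act k \<gamma>"
    using t u unfolding cps_def by blast
  have hs: "hd \<gamma> \<in> halfspaces E" "last \<gamma> \<in> halfspaces E" using seg gne unfolding segment_def by auto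
  show "nested (hd t) (hd u)" using translate[OF h(1) k(1) hs(1)] h k gne by (simp add: copy_def hd_map)
  show "nested (last t) (last u)" using translate[OF h(1) k(1) hs(2)] h k gne by (simp add: copy_def last_map)
qed

lemma valid_cps: "valid \<gamma> x y S \<Longrightarrow> S \<subseteq> cps"
  unfolding valid_def cps_def by blast

lemma Mfacts:
  assumes mi: "m \<in> interval E a b \<or> m \<in> interval E b a" and H: "H \<in> halfspaces E"
  shows "a \<notin> H \<Longrightarrow> b \<notin> H \<Longrightarrow> m \<notin> H" and "a \<in> H \<Longrightarrow> b \<in> H \<Longrightarrow> m \<in> H"
  using mi median_sep[OF _ H, of m a b] median_sep[OF _ H, of m b a] by blast+

lemma sep_am:
  assumes mi: "m \<in> interval E a b \<or> m \<in> interval E b a" and H: "H \<in> sep E a m"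
  shows "H \<in> sep E a b"
proof -
  have h: "H \<in> halfspaces E" "a \<notin> H" "m \<in> H" using H by (auto simp: sep_def)
  have "b \<in> H" using Mfacts(1)[OF mi h(1) h(2)] h(3) by blast
  then show ?thesis using h by (simp add: sep_def)
qed

lemma sep_mb:
  assumes mi: "m \<in> interval E a b \<or> m \<in> interval E b a" and H: "H \<in> sep E m b"
  shows "H \<in> sep E a b"
proof -
  have h: "H \<in> halfspaces E" "m \<notin> H" "b \<in> H" using H by (auto simp: sep_def)
  have "a \<notin> H" using Mfacts(2)[OF mi h(1) _ h(3)] h(2) by blast
  then show ?thesis using h by (simp add: sep_def)
qed

lemma straddle_aux:
  assumes t: "t \<in> cps" and u: "u \<in> cps" and no: "\<not> overlap t u"
    and st: "set t \<subseteq> sep E a b" and su: "set u \<subseteq> sep E a b"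
    and i: "Suc i < length t" "m \<in> t ! i"
    and j: "Suc j < length u" "m \<in> u ! j" "m \<notin> u ! Suc j"
    and sub: "t ! i \<subseteq> u ! j"
  shows False
proof -
  have A: "t ! i \<in> set t" using i by simp
  have B: "u ! j \<in> set u" using j by simp
  have B': "u ! Suc j \<in> set u" using j by simp
  have "t ! i \<noteq> u ! j" using nonoverlap_D(1)[OF no A B] .
  then have AB: "t ! i \<subset> u ! j" using sub by auto
  have sA: "t ! i \<in> sep E a b" and sB': "u ! Suc j \<in> sep E a b" using A B' st su by auto
  have "t ! i \<subseteq> u ! Suc j \<or> u ! Suc j \<subseteq> t ! i"
    using comparable[OF nonoverlap_D(2)[OF no A B'], of a b] sA sB' by (simp add: sep_def)
  moreover have "\<not> t ! i \<subseteq> u ! Suc j" using i j by auto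
  ultimately have "u ! Suc j \<subseteq> t ! i" by simp
  moreover have "u ! Suc j \<noteq> t ! i" using nonoverlap_D(1)[OF no A B'] by simp
  ultimately have "u ! Suc j \<subset> t ! i" by auto
  moreover have "t ! i \<in> halfspaces E" using sA by (simp add: sep_def)
  ultimately show False using seg_tight[OF cps_seg[OF u] j(1)] AB by blast
qed

lemma split_le:
  assumes mi: "m \<in> interval E a b \<or> m \<in> interval E b a"
  shows "cnt G E act \<gamma> a b \<le> cnt G E act \<gamma> a m + cnt G E act \<gamma> m b + 1"
proof -
  obtain S where S: "valid \<gamma> a b S" "card S = cnt G E act \<gamma> a b" using cnt_props(2)[OF gne] by blast
  have finS: "finite S" using valid_card[OF gne S(1)] by simp
  have Scps: "S \<subseteq> cps" using valid_cps[OF S(1)] .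
  have Sset: "\<And>t. t \<in> S \<Longrightarrow> set t \<subseteq> sep E a b" and Sno: "\<And>t u. t \<in> S \<Longrightarrow> u \<in> S \<Longrightarrow> t \<noteq> u \<Longrightarrow> \<not> overlap t u"
    using S(1) unfolding valid_def by blast+
  define S1 where "S1 = {t \<in> S. set t \<subseteq> sep E a m}"
  define S2 where "S2 = {t \<in> S. set t \<subseteq> sep E m b}"
  define S3 where "S3 = S - S1 - S2"
  have V1: "valid \<gamma> a m S1" using S(1) unfolding valid_def S1_def by blast
  have V2: "valid \<gamma> m b S2" using S(1) unfolding valid_def S2_def by blast
  have c1: "card S1 \<le> cnt G E act \<gamma> a m" by (rule cnt_props(1)[OF gne V1])
  have c2: "card S2 \<le> cnt G E act \<gamma> m b" by (rule cnt_props(1)[OF gne V2])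
  have straddle: "\<exists>i. Suc i < length t \<and> m \<in> t ! i \<and> m \<notin> t ! Suc i" if t: "t \<in> S3" for t
  proof -
    have tS: "t \<in> S" and n1: "\<not> set t \<subseteq> sep E a m" and n2: "\<not> set t \<subseteq> sep E m b"
      using t unfolding S3_def S1_def S2_def by auto
    obtain B where B: "B \<in> set t" "B \<notin> sep E a m" using n1 by blast
    obtain A where A: "A \<in> set t" "A \<notin> sep E m b" using n2 by blast
    have "A \<in> sep E a b" "B \<in> sep E a b" using A B Sset[OF tS] by auto
    then have "m \<in> A" "m \<notin> B" using A B by (auto simp: sep_def)
    then show ?thesis using seg_ivt[OF cps_seg[of t] A(1) _ B(1)] Scps tS by blast
  qed
  have c3: "card S3 \<le> 1"
  proof -
    have "\<forall>t\<in>S3. \<forall>u\<in>S3. t = u"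
    proof (intro ballI)
      fix t u assume t: "t \<in> S3" and u: "u \<in> S3"
      show "t = u"
      proof (rule ccontr)
        assume tu: "t \<noteq> u"
        have tS: "t \<in> S" and uS: "u \<in> S" using t u unfolding S3_def by auto
        obtain i where i: "Suc i < length t" "m \<in> t ! i" "m \<notin> t ! Suc i" using straddle[OF t] by blast
        obtain j where j: "Suc j < length u" "m \<in> u ! j" "m \<notin> u ! Suc j" using straddle[OF u] by blast
        have ntu: "\<not> overlap t u" and nut: "\<not> overlap u t" using Sno tS uS tu by auto
        have A: "t ! i \<in> set t" and B: "u ! j \<in> set u" using i j by auto
        have sA: "t ! i \<in> sep E a b" and sB: "u ! j \<in> sep E a b" using A B Sset tS uS by auto
        have "t ! i \<subseteq> u ! j \<or> u ! j \<subseteq> t ! i"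
          using comparable[OF nonoverlap_D(2)[OF ntu A B], of a b] sA sB by (simp add: sep_def)
        then show False
        proof
          assume "t ! i \<subseteq> u ! j"
          then show False using straddle_aux[of t u a b i m j] Scps tS uS ntu Sset i j by blast
        next
          assume "u ! j \<subseteq> t ! i"
          then show False using straddle_aux[of u t a b j m i] Scps tS uS nut Sset i j by blast
        qed
      qed
    qed
    moreover have "finite S3" using finS unfolding S3_def by simp
    ultimately show ?thesis using card_le_Suc0_iff_eq by auto
  qed
  have "S = S1 \<union> S2 \<union> S3" unfolding S1_def S2_def S3_def by auto
  then have "card S \<le> card S1 + card S2 + card S3"
    by (metis card_Un_le le_trans add_le_mono1)
  then show ?thesis using S(2) c1 c2 c3 by simp
qed


lemma cps_ne: "t \<in> cps \<Longrightarrow> t \<noteq> []"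
  using cps_seg by (simp add: segment_def)

lemma gap_pair:
  assumes t: "t \<in> cps" and t': "t' \<in> cps"
    and cmp: "\<And>X Y. X \<in> set t \<Longrightarrow> Y \<in> set t' \<Longrightarrow> X \<noteq> Y \<and> (X \<subseteq> Y \<or> Y \<subseteq> X)"
    and l: "last t \<subset> last t'" and h: "last t' \<subset> hd t"
  shows False
proof -
  have st': "segment E t'" using cps_seg[OF t'] .
  have lm: "last t' \<in> set t'" using cps_ne[OF t'] by simp
  have C: "last t' \<in> halfspaces E" using st' lm unfolding segment_def by blast
  have nC: "last t' \<notin> set t" using cmp lm by blast
  show False
    by (rule seg_gap[OF cps_seg[OF t] C nC _ l h]) (use cmp lm in blast)
qed

lemma split_ge:
  assumes mi: "m \<in> interval E a b \<or> m \<in> interval E b a"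
  shows "cnt G E act \<gamma> a m + cnt G E act \<gamma> m b \<le> cnt G E act \<gamma> a b + 1"
proof -
  obtain P where P: "valid \<gamma> a m P" "card P = cnt G E act \<gamma> a m" using cnt_props(2)[OF gne] by blast
  obtain Q where Q: "valid \<gamma> m b Q" "card Q = cnt G E act \<gamma> m b" using cnt_props(2)[OF gne] by blast
  have finP: "finite P" using valid_card[OF gne P(1)] by simp
  have finQ: "finite Q" using valid_card[OF gne Q(1)] by simp
  have Pc: "P \<subseteq> cps" using valid_cps[OF P(1)] .
  have Qc: "Q \<subseteq> cps" using valid_cps[OF Q(1)] .
  have Pset: "\<And>t. t \<in> P \<Longrightarrow> set t \<subseteq> sep E a m" and Pno: "\<And>t u. t \<in> P \<Longrightarrow> u \<in> P \<Longrightarrow> t \<noteq> u \<Longrightarrow> \<not> overlap t u"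
    using P(1) unfolding valid_def by blast+
  have Qset: "\<And>t. t \<in> Q \<Longrightarrow> set t \<subseteq> sep E m b" and Qno: "\<And>t u. t \<in> Q \<Longrightarrow> u \<in> Q \<Longrightarrow> t \<noteq> u \<Longrightarrow> \<not> overlap t u"
    using Q(1) unfolding valid_def by blast+
  have memP: "a \<notin> X \<and> m \<in> X \<and> b \<in> X \<and> X \<in> halfspaces E" if "X \<in> set p" "p \<in> P" for X p
  proof -
    have "X \<in> sep E a m" using that Pset by blast
    then show ?thesis using sep_am[OF mi] by (auto simp: sep_def)
  qed
  have memQ: "a \<notin> X \<and> m \<notin> X \<and> b \<in> X \<and> X \<in> halfspaces E" if "X \<in> set q" "q \<in> Q" for X q
  proof -
    have "X \<in> sep E m b" using that Qset by blast
    then show ?thesis using sep_mb[OF mi] by (auto simp: sep_def)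
  qed
  have cross: "Y \<subseteq> X" if "X \<in> set p" "p \<in> P" "Y \<in> set q" "q \<in> Q" "nested X Y" for X Y p q
    using memP[OF that(1,2)] memQ[OF that(3,4)] that(5) unfolding nested_def by blast
  have hl: "hd q \<subseteq> hd p \<and> last q \<subseteq> last p" if p: "p \<in> P" and q: "q \<in> Q" for p q
  proof -
    have pc: "p \<in> cps" and qc: "q \<in> cps" using p q Pc Qc by auto
    have "hd p \<in> set p" "last p \<in> set p" using cps_ne[OF pc] by auto
    moreover have "hd q \<in> set q" "last q \<in> set q" using cps_ne[OF qc] by auto
    ultimately show ?thesis using cross p q cps_hd_last[OF pc qc] by blast
  qed
  have good: "\<not> overlap p q \<and> \<not> overlap q p" if p: "p \<in> P" and q: "q \<in> Q" and g: "hd q \<subseteq> last p" for p q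
  proof -
    have pc: "p \<in> cps" and qc: "q \<in> cps" using p q Pc Qc by auto
    have sub: "B \<subseteq> A" if "A \<in> set p" "B \<in> set q" for A B
      using seg_hd_last(1)[OF cps_seg[OF qc] that(2)] seg_hd_last(2)[OF cps_seg[OF pc] that(1)] g by blast
    have neq: "A \<noteq> B" if "A \<in> set p" "B \<in> set q" for A B
      using memP[OF that(1) p] memQ[OF that(2) q] by blast
    show ?thesis unfolding overlap_def transverse_def nested_def using sub neq by blast
  qed
  have cmpP: "X \<noteq> Y \<and> (X \<subseteq> Y \<or> Y \<subseteq> X)" if "p \<in> P" "p' \<in> P" "p \<noteq> p'" "X \<in> set p" "Y \<in> set p'" for p p' X Y
  proof -
    have no: "\<not> overlap p p'" using Pno that by blast
    show ?thesis using nonoverlap_D[OF no that(4,5)] comparable[of X Y a m] memP that by blast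
  qed
  have cmpQ: "X \<noteq> Y \<and> (X \<subseteq> Y \<or> Y \<subseteq> X)" if "q \<in> Q" "q' \<in> Q" "q \<noteq> q'" "X \<in> set q" "Y \<in> set q'" for q q' X Y
  proof -
    have no: "\<not> overlap q q'" using Qno that by blast
    show ?thesis using nonoverlap_D[OF no that(4,5)] comparable[of X Y m b] memQ that by blast
  qed
  have badP: False if "p \<in> P" "p' \<in> P" "q \<in> Q" "p \<noteq> p'" "\<not> hd q \<subseteq> last p" "\<not> hd q \<subseteq> last p'" for p p' q
  proof -
    have pc: "p \<in> cps" and pc': "p' \<in> cps" using that Pc by auto
    have m1: "hd p \<in> set p" "last p \<in> set p" using cps_ne[OF pc] by auto
    have m2: "hd p' \<in> set p'" "last p' \<in> set p'" using cps_ne[OF pc'] by auto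
    have h1: "hd q \<subseteq> hd p" "hd q \<subseteq> hd p'" using hl that by auto
    have "last p' \<subseteq> hd p" using cmpP[OF that(1,2,4) m1(1) m2(2)] h1 that(6) by blast
    then have l1: "last p' \<subset> hd p" using cmpP[OF that(1,2,4) m1(1) m2(2)] by auto
    have "last p \<subseteq> hd p'" using cmpP[OF that(1,2,4) m1(2) m2(1)] h1 that(5) by blast
    then have l2: "last p \<subset> hd p'" using cmpP[OF that(1,2,4) m1(2) m2(1)] by auto
    have c12: "\<And>X Y. X \<in> set p \<Longrightarrow> Y \<in> set p' \<Longrightarrow> X \<noteq> Y \<and> (X \<subseteq> Y \<or> Y \<subseteq> X)"
      using cmpP[OF that(1,2,4)] by blast
    have c21: "\<And>X Y. X \<in> set p' \<Longrightarrow> Y \<in> set p \<Longrightarrow> X \<noteq> Y \<and> (X \<subseteq> Y \<or> Y \<subseteq> X)"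
      using cmpP[OF that(1,2,4)] by blast
    have "last p \<noteq> last p'" "last p \<subseteq> last p' \<or> last p' \<subseteq> last p" using c12[OF m1(2) m2(2)] by auto
    then have "last p \<subset> last p' \<or> last p' \<subset> last p" by auto
    then show False
    proof
      assume "last p \<subset> last p'"
      then show False using gap_pair[OF pc pc' c12 _ l1] by blast
    next
      assume "last p' \<subset> last p"
      then show False using gap_pair[OF pc' pc c21 _ l2] by blast
    qed
  qed
  have badQ: False if "p \<in> P" "q \<in> Q" "q' \<in> Q" "q \<noteq> q'" "\<not> hd q \<subseteq> last p" "\<not> hd q' \<subseteq> last p" for p q q'
  proof -
    have qc: "q \<in> cps" and qc': "q' \<in> cps" using that Qc by auto
    have m1: "hd q \<in> set q" "last q \<in> set q" using cps_ne[OF qc] by auto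
    have m2: "hd q' \<in> set q'" "last q' \<in> set q'" using cps_ne[OF qc'] by auto
    have h1: "last q \<subseteq> last p" "last q' \<subseteq> last p" using hl that by auto
    have "last q' \<subseteq> hd q" using cmpQ[OF that(2,3,4) m1(1) m2(2)] h1 that(5) by blast
    then have l1: "last q' \<subset> hd q" using cmpQ[OF that(2,3,4) m1(1) m2(2)] by auto
    have "last q \<subseteq> hd q'" using cmpQ[OF that(2,3,4) m1(2) m2(1)] h1 that(6) by blast
    then have l2: "last q \<subset> hd q'" using cmpQ[OF that(2,3,4) m1(2) m2(1)] by auto
    have c12: "\<And>X Y. X \<in> set q \<Longrightarrow> Y \<in> set q' \<Longrightarrow> X \<noteq> Y \<and> (X \<subseteq> Y \<or> Y \<subseteq> X)"
      using cmpQ[OF that(2,3,4)] by blast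
    have c21: "\<And>X Y. X \<in> set q' \<Longrightarrow> Y \<in> set q \<Longrightarrow> X \<noteq> Y \<and> (X \<subseteq> Y \<or> Y \<subseteq> X)"
      using cmpQ[OF that(2,3,4)] by blast
    have "last q \<noteq> last q'" "last q \<subseteq> last q' \<or> last q' \<subseteq> last q" using c12[OF m1(2) m2(2)] by auto
    then have "last q \<subset> last q' \<or> last q' \<subset> last q" by auto
    then show False
    proof
      assume "last q \<subset> last q'"
      then show False using gap_pair[OF qc qc' c12 _ l1] by blast
    next
      assume "last q' \<subset> last q"
      then show False using gap_pair[OF qc' qc c21 _ l2] by blast
    qed
  qed
  have badX: False if "p \<in> P" "p0 \<in> P" "q \<in> Q" "q0 \<in> Q" "p \<noteq> p0" "q \<noteq> q0"
      "\<not> hd q \<subseteq> last p" "\<not> hd q0 \<subseteq> last p0" for p p0 q q0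
  proof -
    have e1: "hd q \<subseteq> last p0" using badP[OF that(1,2,3,5) that(7)] by blast
    have e2: "hd q0 \<subseteq> last p" using badP[OF that(2,1,4) _ that(8)] that(5) by blast
    have pc: "p \<in> cps" and pc0: "p0 \<in> cps" using that Pc by auto
    have "last p \<in> set p" "last p0 \<in> set p0" using cps_ne[OF pc] cps_ne[OF pc0] by auto
    then have "last p \<subseteq> last p0 \<or> last p0 \<subseteq> last p" using cmpP[OF that(1,2,5)] by blast
    then show False using e1 e2 that(7,8) by blast
  qed
  have disj: "P \<inter> Q = {}"
  proof (rule ccontr)
    assume "P \<inter> Q \<noteq> {}"
    then obtain t where t: "t \<in> P" "t \<in> Q" by blast
    then have "hd t \<in> set t" using cps_ne Pc by auto
    then show False using memP[OF _ t(1)] memQ[OF _ t(2)] by blast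
  qed
  have validR: "valid \<gamma> a b R" if R: "R \<subseteq> P \<union> Q" and ok: "\<And>p q. p \<in> P \<Longrightarrow> q \<in> Q \<Longrightarrow> p \<in> R \<Longrightarrow> q \<in> R \<Longrightarrow> hd q \<subseteq> last p" for R
    unfolding valid_def
  proof (intro conjI ballI impI)
    show "R \<subseteq> {copy act h \<gamma> |h. h \<in> carrier G}" using R Pc Qc unfolding cps_def by blast
  next
    fix t assume "t \<in> R"
    then show "set t \<subseteq> sep E a b" using R Pset Qset sep_am[OF mi] sep_mb[OF mi] by blast
  next
    fix t u assume t: "t \<in> R" and u: "u \<in> R" and tu: "t \<noteq> u"
    show "\<not> overlap t u"
    proof (cases "t \<in> P")
      case tP: True
      show ?thesis
      proof (cases "u \<in> P")
        case True then show ?thesis using Pno tP tu by blast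
      next
        case False then have "u \<in> Q" using u R by blast
        then show ?thesis using good[OF tP] ok[OF tP _ t u] by blast
      qed
    next
      case tQ0: False
      then have tQ: "t \<in> Q" using t R by blast
      show ?thesis
      proof (cases "u \<in> P")
        case True then show ?thesis using good[OF True tQ] ok[OF True tQ u t] by blast
      next
        case False then have "u \<in> Q" using u R by blast
        then show ?thesis using Qno tQ tu by blast
      qed
    qed
  qed
  show ?thesis
  proof (cases "\<exists>p\<in>P. \<exists>q\<in>Q. \<not> hd q \<subseteq> last p")
    case False
    then have "valid \<gamma> a b (P \<union> Q)" by (intro validR) auto
    then have "card (P \<union> Q) \<le> cnt G E act \<gamma> a b" by (rule cnt_props(1)[OF gne])
    moreover have "card (P \<union> Q) = card P + card Q" using card_Un_disjoint[OF finP finQ disj] .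
    ultimately show ?thesis using P(2) Q(2) by simp
  next
    case True
    then obtain p0 q0 where pq0: "p0 \<in> P" "q0 \<in> Q" "\<not> hd q0 \<subseteq> last p0" by blast
    have "valid \<gamma> a b ((P - {p0}) \<union> Q)"
    proof (rule validR)
      show "P - {p0} \<union> Q \<subseteq> P \<union> Q" by blast
    next
      fix p q assume p: "p \<in> P" and q: "q \<in> Q" and pR: "p \<in> P - {p0} \<union> Q"
      have pp0: "p \<noteq> p0" using pR disj p by blast
      show "hd q \<subseteq> last p"
      proof (rule ccontr)
        assume bad: "\<not> hd q \<subseteq> last p"
        show False
        proof (cases "q = q0")
          case True then show False using badP[OF p pq0(1) q pp0 bad] pq0(3) by simp
        next
          case False show False by (rule badX[OF p pq0(1) q pq0(2) pp0 False bad pq0(3)])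
        qed
      qed
    qed
    then have "card ((P - {p0}) \<union> Q) \<le> cnt G E act \<gamma> a b" by (rule cnt_props(1)[OF gne])
    moreover have "card ((P - {p0}) \<union> Q) = card (P - {p0}) + card Q"
      by (rule card_Un_disjoint) (use finP finQ disj in auto)
    moreover have "card (P - {p0}) + 1 = card P" using finP pq0(1)
      by (simp add: card_Diff_singleton) (metis card_0_eq empty_iff Suc_pred neq0_conv)
    ultimately show ?thesis using P(2) Q(2) by simp
  qed
qed

lemma omega_eq: "omega G E act \<gamma> x y = int (cnt G E act \<gamma> x y) - int (cnt G E act \<gamma> y x)"
  unfolding omega_def cnt_rev[OF gne] ..

lemma triangle:
  "\<bar>omega G E act \<gamma> x z - omega G E act \<gamma> x y - omega G E act \<gamma> y z\<bar> \<le> 6"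
proof -
  obtain m where m: "m \<in> interval E x y" "m \<in> interval E y z" "m \<in> interval E x z"
    using median_ex by blast
  let ?c = "\<lambda>a b. int (cnt G E act \<gamma> a b)"
  have e: "\<bar>?c a b - ?c a m - ?c m b\<bar> \<le> 1" if "m \<in> interval E a b \<or> m \<in> interval E b a" for a b
    using split_le[OF that] split_ge[OF that] by linarith
  have "\<bar>?c x z - ?c x m - ?c m z\<bar> \<le> 1" "\<bar>?c z x - ?c z m - ?c m x\<bar> \<le> 1"
       "\<bar>?c x y - ?c x m - ?c m y\<bar> \<le> 1" "\<bar>?c y x - ?c y m - ?c m x\<bar> \<le> 1"
       "\<bar>?c y z - ?c y m - ?c m z\<bar> \<le> 1" "\<bar>?c z y - ?c z m - ?c m y\<bar> \<le> 1"
    using e m by blast+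
  then show ?thesis unfolding omega_eq by linarith
qed
end

theorem lemma4p8:
  fixes G :: "('g, 'b) monoid_scheme" and E :: "'v \<Rightarrow> 'v \<Rightarrow> bool"
    and act :: "'g \<Rightarrow> 'v \<Rightarrow> 'v" and \<gamma> :: "'v set list" and x0 :: 'v
  assumes "median_graph E"
    and "aut_action G E act"
    and "non_transverse G E act"
    and "segment E \<gamma>"
  defines "\<phi> \<equiv> (\<lambda>g. real_of_int (omega G E act \<gamma> x0 (act g x0)))"
  shows "(\<forall>g\<in>carrier G. \<forall>h\<in>carrier G. \<bar>\<phi> (g \<otimes>\<^bsub>G\<^esub> h) - \<phi> g - \<phi> h\<bar> \<le> 6)
    \<and> (\<forall>g\<in>carrier G. convergent (\<lambda>n::nat. \<phi> (g [^]\<^bsub>G\<^esub> n) / real n))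
    \<and> (let \<psi> = (\<lambda>g. lim (\<lambda>n::nat. \<phi> (g [^]\<^bsub>G\<^esub> n) / real n)) in
        (\<forall>g\<in>carrier G. \<forall>h\<in>carrier G. \<bar>\<psi> (g \<otimes>\<^bsub>G\<^esub> h) - \<psi> g - \<psi> h\<bar> \<le> 12)
      \<and> (\<forall>g\<in>carrier G. \<forall>n::int. \<psi> (g [^]\<^bsub>G\<^esub> n) = real_of_int n * \<psi> g))"
proof -
  note hyps = assms(1-4)
  interpret C: ccg E G act \<gamma>
  proof unfold_locales
    show "median_graph E" by (rule hyps(1))
    show "aut_action G E act" by (rule hyps(2))
    show "segment E \<gamma>" by (rule hyps(4))
    show "non_transverse G E act" by (rule hyps(3))
  qed
  have grp: "group G" by (rule C.grp)
  have om_act: "omega G E act \<gamma> (act g x) (act g y) = omega G E act \<gamma> x y" if "g \<in> carrier G" for g x y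
    unfolding C.omega_eq using C.cnt_act[OF C.gne that] by simp
  have qm: "\<bar>\<phi> (g \<otimes>\<^bsub>G\<^esub> h) - \<phi> g - \<phi> h\<bar> \<le> 6" if g: "g \<in> carrier G" and h: "h \<in> carrier G" for g h
  proof -
    have e1: "act (g \<otimes>\<^bsub>G\<^esub> h) x0 = act g (act h x0)" using C.act_mult[OF g h] by simp
    have e2: "omega G E act \<gamma> x0 (act h x0) = omega G E act \<gamma> (act g x0) (act g (act h x0))"
      using om_act[OF g] by simp
    have "\<bar>omega G E act \<gamma> x0 (act g (act h x0)) - omega G E act \<gamma> x0 (act g x0)
          - omega G E act \<gamma> (act g x0) (act g (act h x0))\<bar> \<le> 6" by (rule C.triangle)
    then have "\<bar>real_of_int (omega G E act \<gamma> x0 (act g (act h x0)) - omega G E act \<gamma> x0 (act g x0)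
          - omega G E act \<gamma> (act g x0) (act g (act h x0)))\<bar> \<le> 6" by linarith
    then show ?thesis unfolding \<phi>_def e1 e2 by simp
  qed
  have one: "\<phi> \<one>\<^bsub>G\<^esub> = 0" unfolding \<phi>_def C.omega_eq using C.act_one by simp
  have anti: "\<phi> (inv\<^bsub>G\<^esub> g) = - \<phi> g" if g: "g \<in> carrier G" for g
  proof -
    have "omega G E act \<gamma> x0 (act (inv\<^bsub>G\<^esub> g) x0) = omega G E act \<gamma> (act g x0) x0"
      using om_act[OF g, of x0 "act (inv\<^bsub>G\<^esub> g) x0"] C.act_inv2[OF g] by simp
    then show ?thesis unfolding \<phi>_def C.omega_eq by simp
  qed
  interpret Q: qmor G \<phi> 6
  proof (rule qmor.intro[OF grp])
    show "qmor_axioms G \<phi> 6" unfolding qmor_axioms_def using qm one anti by simp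
  qed
  have seq_eq: "(\<lambda>n::nat. \<phi> (g [^]\<^bsub>G\<^esub> n) / real n) = Q.seq g" for g
    by (rule ext) (simp add: Q.seq_def)
  have psi_eq: "(\<lambda>g. lim (\<lambda>n::nat. \<phi> (g [^]\<^bsub>G\<^esub> n) / real n)) = Q.psi"
    by (rule ext) (simp add: Q.psi_def seq_eq)
  show ?thesis
    unfolding Let_def psi_eq
  proof (intro conjI ballI allI)
    fix g h assume "g \<in> carrier G" "h \<in> carrier G"
    then show "\<bar>\<phi> (g \<otimes>\<^bsub>G\<^esub> h) - \<phi> g - \<phi> h\<bar> \<le> 6" by (rule qm)
  next
    fix g assume "g \<in> carrier G"
    then show "convergent (\<lambda>n::nat. \<phi> (g [^]\<^bsub>G\<^esub> n) / real n)" unfolding seq_eq by (rule Q.seq_conv)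
  next
    fix g h assume "g \<in> carrier G" "h \<in> carrier G"
    then show "\<bar>Q.psi (g \<otimes>\<^bsub>G\<^esub> h) - Q.psi g - Q.psi h\<bar> \<le> 12" using Q.psi_defect by fastforce
  next
    fix g and n :: int assume "g \<in> carrier G"
    then show "Q.psi (g [^]\<^bsub>G\<^esub> n) = real_of_int n * Q.psi g" by (rule Q.psi_pow_int)
  qed
qed

end
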